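(* Let $I(x)=\int_0^x e^{u^2/2}\operatorname{erf}(u/\sqrt2)\,du$. Then for every real $x\neq0$, \[ I(x)\;\ge\;\ell(x):=\sqrt{\frac{(e^{x^2/2}-1)^3}{x^2e^{x^2/2}}}. \]
   Context: $\operatorname{erf}(z)=\frac{2}{\sqrt\pi}\int_0^z e^{-t^2}dt$. *)

theory Defs
  imports "HOL-Analysis.Analysis"
begin

text \<open>Error function on the reals, erf z = 2/sqrt pi * int_0^z exp(-t^2) dt
  (oriented interval integral, so negative z is handled correctly).\<close>
definition erf :: "real \<Rightarrow> real" where
  "erf z = 2 / sqrt pi * (LBINT t=0..z. exp (- (t^2)))"

definition I_fun :: "real \<Rightarrow> real" where
  "I_fun x = (LBINT u=0..x. exp (u^2 / 2) * erf (u / sqrt 2))"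

definition ell :: "real \<Rightarrow> real" where
  "ell x = sqrt ((exp (x^2/2) - 1) ^ 3 / (x^2 * exp (x^2/2)))"

end

theory Submission imports Defs "HOL-Probability.Distributions" begin

lemma deriv_LBINT:
  fixes f :: "real \<Rightarrow> real" and c x :: real
  assumes "continuous_on UNIV f"
  shows "((\<lambda>u. LBINT y=c..u. f y) has_real_derivative f x) (at x)"
proof -
  have "((\<lambda>u. LBINT y=c..u. f y) has_vector_derivative f x) (at x within {min c (x-1)..max c (x+1)})"
    by (rule interval_integral_FTC2) (auto intro: continuous_on_subset[OF assms])
  then have "((\<lambda>u. LBINT y=c..u. f y) has_vector_derivative f x) (at x within {x-1<..<x+1})"
    by (rule has_vector_derivative_within_subset) auto
  moreover have o: "x \<in> {x-1<..<x+1}" "open {x-1<..<x+1}" by auto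
  ultimately have "((\<lambda>u. LBINT y=c..u. f y) has_vector_derivative f x) (at x)"
    using has_vector_derivative_within_open[OF o] by blast
  then show ?thesis by (simp add: has_real_derivative_iff_has_vector_derivative)
qed

definition W :: "real \<Rightarrow> real" where "W y = (LBINT t=0..y. exp (- (t^2)))"

lemma W_deriv: "(W has_real_derivative exp (- (x^2))) (at x)"
  unfolding W_def zero_ereal_def by (rule deriv_LBINT) (intro continuous_intros)

lemma W_cont: "isCont W x"
  using W_deriv DERIV_isCont by blast

lemma W0: "W 0 = 0" by (simp add: W_def zero_ereal_def[symmetric])

lemma W_lim: "(W \<longlongrightarrow> sqrt pi / 2) at_top"
proof -
  have hb: "has_bochner_integral lborel (\<lambda>x::real. indicator {0..} x *\<^sub>R exp (- x\<^sup>2)) (sqrt pi / 2 :: real)"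
    by (rule gaussian_moment_0)
  have si: "set_integrable lborel {0..} (\<lambda>x::real. exp (- x\<^sup>2) :: real)"
    unfolding set_integrable_def using hb[unfolded has_bochner_integral_iff] by (rule conjunct1)
  have sv: "(LINT x:{0..}|lborel. (exp (- x\<^sup>2) :: real)) = sqrt pi / 2"
    unfolding set_lebesgue_integral_def using has_bochner_integral_integral_eq[OF hb] .
  have "((\<lambda>b. LINT x:{0..b}|lborel. (exp (- x\<^sup>2) :: real)) \<longlongrightarrow> sqrt pi / 2) at_top"
    using tendsto_set_lebesgue_integral_at_top[OF _ si] sv by simp
  moreover have "eventually (\<lambda>b. (LINT x:{0..b}|lborel. (exp (- x\<^sup>2) :: real)) = W b) at_top"
    using eventually_ge_at_top[of 0] by eventually_elim (simp add: W_def zero_ereal_def interval_integral_Icc)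
  ultimately show ?thesis by (rule Lim_transform_eventually)
qed

lemma ex_ge: "(f has_real_derivative d) (at x) \<Longrightarrow> 0 \<le> d \<Longrightarrow> \<exists>y. (f has_real_derivative y) (at x) \<and> 0 \<le> y"
  by blast
lemma ex_le: "(f has_real_derivative d) (at x) \<Longrightarrow> d \<le> 0 \<Longrightarrow> \<exists>y. (f has_real_derivative y) (at x) \<and> y \<le> 0"
  by blast

lemma G_nonneg:
  assumes y: "0 \<le> y" and Gy: "W y - pi/4 * y \<ge> 0" and z: "0 \<le> z" "z \<le> y"
  shows "W z - pi/4 * z \<ge> 0"
proof -
  let ?G = "\<lambda>s. W s - pi/4 * s"
  have dG: "\<And>s. (?G has_real_derivative exp (- (s^2)) - pi/4) (at s)"
    by (auto intro!: derivative_eq_intros W_deriv)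
  show ?thesis
  proof (cases "exp (- (z^2)) \<ge> pi/4")
    case True
    have "?G 0 \<le> ?G z"
    proof (rule DERIV_nonneg_imp_nondecreasing[OF z(1)])
      fix s assume s: "0 \<le> s" "s \<le> z"
      have "exp (- (z^2)) \<le> exp (- (s^2))" using s by (simp add: power_mono)
      then show "\<exists>d. (?G has_real_derivative d) (at s) \<and> 0 \<le> d" using True by (intro ex_ge[OF dG]) linarith
    qed
    then show ?thesis by (simp add: W0)
  next
    case False
    have "?G z \<ge> ?G y"
    proof (rule DERIV_nonpos_imp_nonincreasing[OF z(2)])
      fix s assume s: "z \<le> s" "s \<le> y"
      have "exp (- (s^2)) \<le> exp (- (z^2))" using s z by (simp add: power_mono)
      then show "\<exists>d. (?G has_real_derivative d) (at s) \<and> d \<le> 0" using False by (intro ex_le[OF dG]) linarith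
    qed
    then show ?thesis using Gy by linarith
  qed
qed

lemma G_nonpos:
  assumes y: "0 \<le> y" and Gy: "W y - pi/4 * y < 0" and z: "y \<le> z"
  shows "W z - pi/4 * z \<le> 0"
proof -
  let ?G = "\<lambda>s. W s - pi/4 * s"
  have dG: "\<And>s. (?G has_real_derivative exp (- (s^2)) - pi/4) (at s)"
    by (auto intro!: derivative_eq_intros W_deriv)
  show ?thesis
  proof (cases "exp (- (y^2)) \<le> pi/4")
    case True
    have "?G z \<le> ?G y"
    proof (rule DERIV_nonpos_imp_nonincreasing[OF z])
      fix s assume s: "y \<le> s" "s \<le> z"
      have "exp (- (s^2)) \<le> exp (- (y^2))" using s y by (simp add: power_mono)
      then show "\<exists>d. (?G has_real_derivative d) (at s) \<and> d \<le> 0" using True by (intro ex_le[OF dG]) linarith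
    qed
    then show ?thesis using Gy by linarith
  next
    case False
    have "?G 0 \<le> ?G y"
    proof (rule DERIV_nonneg_imp_nondecreasing[OF y])
      fix s assume s: "0 \<le> s" "s \<le> y"
      have "exp (- (y^2)) \<le> exp (- (s^2))" using s by (simp add: power_mono)
      then show "\<exists>d. (?G has_real_derivative d) (at s) \<and> 0 \<le> d" using False by (intro ex_ge[OF dG]) linarith
    qed
    moreover have "?G 0 = 0" by (simp add: W0)
    ultimately show ?thesis using Gy by linarith
  qed
qed

lemma polya:
  assumes y: "0 \<le> y"
  shows "W y ^ 2 \<ge> pi/4 * (1 - exp (- (y^2)))"
proof -
  let ?E = "\<lambda>s. W s ^ 2 - pi/4 * (1 - exp (- (s^2)))"
  have dE: "\<And>s. (?E has_real_derivative 2 * exp (- (s^2)) * (W s - pi/4 * s)) (at s)"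
    by (auto intro!: derivative_eq_intros W_deriv simp: algebra_simps)
  show ?thesis
  proof (cases "W y - pi/4 * y \<ge> 0")
    case True
    have "?E 0 \<le> ?E y"
    proof (rule DERIV_nonneg_imp_nondecreasing[OF y])
      fix s assume s: "0 \<le> s" "s \<le> y"
      have "W s - pi/4 * s \<ge> 0" using G_nonneg[OF y True s] .
      then show "\<exists>d. (?E has_real_derivative d) (at s) \<and> 0 \<le> d" by (intro ex_ge[OF dE]) simp
    qed
    then show ?thesis by (simp add: W0)
  next
    case False
    have dec: "?E z \<le> ?E y" if z: "y \<le> z" for z
    proof (rule DERIV_nonpos_imp_nonincreasing[OF z])
      fix s assume s: "y \<le> s" "s \<le> z"
      have "W s - pi/4 * s \<le> 0" using G_nonpos[OF y _ s(1)] False by simp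
      then have "2 * exp (- (s^2)) * (W s - pi/4 * s) \<le> 0" by (simp add: mult_nonneg_nonpos)
      then show "\<exists>d. (?E has_real_derivative d) (at s) \<and> d \<le> 0" by (intro ex_le[OF dE])
    qed
    have e0: "((\<lambda>s::real. exp (- (s^2))) \<longlongrightarrow> 0) at_top"
      by (intro filterlim_compose[OF exp_at_bot] filterlim_compose[OF filterlim_uminus_at_bot_at_top]
            filterlim_pow_at_top filterlim_ident) auto
    have l0: "(?E \<longlongrightarrow> (sqrt pi / 2) ^ 2 - pi/4 * (1 - 0)) at_top"
      by (intro tendsto_intros W_lim e0)
    have eq: "(sqrt pi / 2) ^ 2 - pi/4 * (1 - 0) = 0"
      by (simp add: power_divide)
    have lim: "(?E \<longlongrightarrow> 0) at_top" using l0 unfolding eq .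
    have ev: "eventually (\<lambda>z. ?E z \<le> ?E y) at_top"
      using eventually_ge_at_top[of y] by eventually_elim (rule dec)
    have "0 \<le> ?E y"
      by (rule tendsto_upperbound[OF lim ev]) simp
    then show ?thesis by simp
  qed
qed

lemma W_odd: "W (- y) = - W y"
proof -
  have "\<forall>s. ((\<lambda>y. W (- y) + W y) has_real_derivative 0) (at s)"
  proof
    fix s
    have "((\<lambda>y. W (- y) + W y) has_real_derivative exp (- ((- s)^2)) * (- 1) + exp (- (s^2))) (at s)"
      by (intro derivative_intros DERIV_chain2[OF W_deriv] W_deriv)
    then show "((\<lambda>y. W (- y) + W y) has_real_derivative 0) (at s)" by simp
  qed
  from DERIV_isconst_all[OF this, of y 0] show ?thesis by (simp add: W0)
qed

lemma W_nonneg: "0 \<le> y \<Longrightarrow> 0 \<le> W y"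
  using DERIV_nonneg_imp_nondecreasing[of 0 y W] W_deriv W0 by force

lemma erf_W: "erf z = 2 / sqrt pi * W z"
  by (simp add: erf_def W_def)

lemma erf_odd: "erf (- z) = - erf z"
  by (simp add: erf_W W_odd)

lemma erf_lower:
  assumes "0 \<le> y" shows "sqrt (1 - exp (- (y^2))) \<le> erf y"
proof -
  have "erf y ^ 2 = 4 / pi * W y ^ 2"
    by (simp add: erf_W power_mult_distrib power_divide)
  also have "\<dots> \<ge> 4 / pi * (pi/4 * (1 - exp (- (y^2))))"
    using polya[OF assms] by (intro mult_left_mono) auto
  finally have "1 - exp (- (y^2)) \<le> erf y ^ 2" by simp
  then have "sqrt (1 - exp (- (y^2))) \<le> sqrt (erf y ^ 2)" by (rule real_sqrt_le_mono)
  moreover have "erf y \<ge> 0" using W_nonneg[OF assms] by (simp add: erf_W)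
  ultimately show ?thesis by simp
qed

definition g :: "real \<Rightarrow> real" where "g u = exp (u^2 / 2) * erf (u / sqrt 2)"

lemma erf_cont: "isCont erf z"
proof -
  have "isCont (\<lambda>z. 2 / sqrt pi * W z) z" by (intro continuous_intros W_cont)
  then show ?thesis by (simp add: erf_W[abs_def])
qed

lemma g_cont: "continuous_on UNIV g"
proof -
  have "isCont g u" for u
  proof -
    have "isCont (\<lambda>u. erf (u / sqrt 2)) u"
      by (rule isCont_o2[OF _ erf_cont]) (intro continuous_intros, simp)
    then show ?thesis unfolding g_def by (intro continuous_intros) auto
  qed
  then show ?thesis by (simp add: continuous_at_imp_continuous_on)
qed

lemma I_deriv: "(I_fun has_real_derivative g x) (at x)"
proof -
  have eq: "I_fun = (\<lambda>x. LBINT u=ereal 0..x. g u)"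
    unfolding I_fun_def[abs_def] g_def[abs_def] zero_ereal_def by simp
  show ?thesis unfolding eq by (rule deriv_LBINT[OF g_cont])
qed

lemma I0: "I_fun 0 = 0" by (simp add: I_fun_def zero_ereal_def[symmetric])

lemma g_odd: "g (- u) = - g u"
  by (simp add: g_def erf_odd)

lemma I_even: "I_fun (- x) = I_fun x"
proof -
  have "\<forall>s. ((\<lambda>y. I_fun (- y) - I_fun y) has_real_derivative 0) (at s)"
  proof
    fix s
    have "((\<lambda>y. I_fun (- y) - I_fun y) has_real_derivative g (- s) * (- 1) - g s) (at s)"
      by (intro derivative_intros DERIV_chain2[OF I_deriv] I_deriv)
    then show "((\<lambda>y. I_fun (- y) - I_fun y) has_real_derivative 0) (at s)" by (simp add: g_odd)
  qed
  from DERIV_isconst_all[OF this, of x 0] show ?thesis by simp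
qed

lemma ell_even: "ell (- x) = ell x" by (simp add: ell_def)

definition q :: "real \<Rightarrow> real" where
  "q t = (exp (t^2/2) - 1) ^ 3 / (t^2 * exp (t^2/2))"

lemma ell_q: "ell t = sqrt (q t)" by (simp add: ell_def q_def)

lemma expm1_le: "exp (a::real) - 1 \<le> a * exp a"
proof -
  have "1 + (- a) \<le> exp (- a)" using exp_ge_add_one_self[of "- a"] by simp
  then have "(1 - a) * exp a \<le> exp (- a) * exp a" by (intro mult_right_mono) auto
  then show ?thesis by (simp add: algebra_simps exp_minus_inverse)
qed

lemma q_cont0: "isCont q 0"
proof -
  have up: "q t \<le> (exp (t^2/2) - 1)^2 / 2" for t
  proof (cases "t = 0")
    case True then show ?thesis by (simp add: q_def)
  next
    case False
    let ?H = "exp (t^2/2)"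
    have H1: "?H - 1 \<ge> 0" by simp
    have "?H - 1 \<le> t^2/2 * ?H" by (rule expm1_le)
    have "(?H - 1)^3 = (?H - 1)^2 * (?H - 1)" by (simp add: power3_eq_cube power2_eq_square)
    also have "\<dots> \<le> (?H - 1)^2 * (t^2/2 * ?H)"
      by (rule mult_left_mono) (use \<open>?H - 1 \<le> t^2/2 * ?H\<close> in auto)
    finally have "(?H - 1)^3 \<le> (?H - 1)^2 * (t^2/2 * ?H)" .
    moreover have "0 < t^2 * ?H" using False by simp
    ultimately show ?thesis unfolding q_def
      by (simp add: divide_le_eq field_simps)
  qed
  have lo: "0 \<le> q t" for t by (simp add: q_def)
  have "((\<lambda>t::real. (exp (t^2/2) - 1)^2 / 2) \<longlongrightarrow> (exp (0^2/2) - 1)^2 / 2) (at 0)"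
    by (intro tendsto_intros) auto
  then have l: "((\<lambda>t::real. (exp (t^2/2) - 1)^2 / 2) \<longlongrightarrow> 0) (at 0)" by simp
  have "(q \<longlongrightarrow> 0) (at 0)"
    by (rule tendsto_sandwich[OF _ _ tendsto_const l]) (intro always_eventually allI lo up)+
  then show ?thesis by (simp add: isCont_def q_def)
qed

lemma t2: "((\<lambda>t::real. (exp (t^2/2) - 1)^3) has_real_derivative 3 * (exp (t^2/2) - 1)^2 * (t * exp (t^2/2))) (at t)"
  by (auto intro!: derivative_eq_intros)
lemma t3: "((\<lambda>t::real. t^2 * exp (t^2/2)) has_real_derivative 2*t*exp (t^2/2) + t^2 * (t * exp (t^2/2))) (at t)"
  by (auto intro!: derivative_eq_intros)
lemma t4: "t \<noteq> 0 \<Longrightarrow> ((\<lambda>t::real. (exp (t^2/2) - 1)^3 / (t^2 * exp (t^2/2))) has_real_derivative 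
   (3 * (exp (t^2/2) - 1)^2 * (t * exp (t^2/2)) * (t^2 * exp (t^2/2)) - (exp (t^2/2) - 1)^3 * (2*t*exp (t^2/2) + t^2 * (t * exp (t^2/2)))) / ((t^2 * exp (t^2/2)) * (t^2 * exp (t^2/2)))) (at t)"
  by (rule DERIV_divide[OF t2 t3]) simp

lemma key:
  assumes t: "0 < t"
  shows "\<exists>d. ((\<lambda>t. I_fun t - ell t) has_real_derivative d) (at t) \<and> 0 \<le> d"
proof -
  define H where "H = exp (t^2/2)"
  have H1: "H > 1" using t by (simp add: H_def)
  have Hge: "1 + t^2/2 \<le> H" unfolding H_def by (rule exp_ge_add_one_self)
  define qd where "qd = (H-1)^2 * (3*t^2*H - (H-1)*(2+t^2)) / (t^3*H)"
  have dq: "(q has_real_derivative qd) (at t)"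
    unfolding q_def[abs_def]
    apply (rule DERIV_cong[OF t4])
     apply (use t in simp)
    unfolding H_def[symmetric] qd_def using t H1 by (simp add: field_simps power2_eq_square power3_eq_cube)
  have qpos: "q t > 0" unfolding q_def using t H1 by (simp add: H_def[symmetric])
  have dell: "(ell has_real_derivative (inverse (sqrt (q t)) / 2) * qd) (at t)"
    unfolding ell_q[abs_def] by (rule DERIV_chain2[OF DERIV_real_sqrt[OF qpos] dq])
  have qd_le: "qd \<le> 2 * (H-1)^2 / t"
  proof -
    have "3*t^2*H - (H-1)*(2+t^2) \<le> 2*t^2*H" using Hge by (simp add: algebra_simps)
    then have "(H-1)^2 * (3*t^2*H - (H-1)*(2+t^2)) \<le> (H-1)^2 * (2*t^2*H)"
      by (intro mult_left_mono) auto
    then have "qd \<le> (H-1)^2 * (2*t^2*H) / (t^3*H)"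
      unfolding qd_def using t H1 by (intro divide_right_mono) auto
    also have "\<dots> = 2 * (H-1)^2 / t" using t H1 by (simp add: field_simps power2_eq_square power3_eq_cube)
    finally show ?thesis .
  qed
  define S where "S = H * sqrt (1 - 1/H)"
  have gS: "S \<le> g t"
  proof -
    have "sqrt (1 - exp (- ((t / sqrt 2)^2))) \<le> erf (t / sqrt 2)"
      by (rule erf_lower) (use t in simp)
    moreover have "exp (- ((t / sqrt 2)^2)) = 1 / H"
      by (simp add: H_def power_divide exp_minus field_simps)
    ultimately show ?thesis unfolding S_def g_def H_def[symmetric]
      using H1 by (intro mult_left_mono) auto
  qed
  have sq: "sqrt (q t) * S = (H-1)^2 / t"
  proof -
    have "q t * (H^2 * (1 - 1/H)) = ((H-1)^2 / t)^2"
      unfolding q_def H_def[symmetric] using t H1 by (simp add: field_simps power2_eq_square power3_eq_cube)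
    then have "sqrt (q t * (H^2 * (1 - 1/H))) = (H-1)^2 / t"
      using t by simp
    moreover have "sqrt (q t * (H^2 * (1 - 1/H))) = sqrt (q t) * S"
      unfolding S_def using H1 by (simp add: real_sqrt_mult)
    ultimately show ?thesis by simp
  qed
  have "(inverse (sqrt (q t)) / 2) * qd \<le> (inverse (sqrt (q t)) / 2) * (2 * (H-1)^2 / t)"
    using qd_le qpos by (intro mult_left_mono) auto
  also have "\<dots> = (H-1)^2 / t / sqrt (q t)" using qpos t by (simp add: field_simps)
  also have "\<dots> = S" using sq qpos t by (simp add: divide_eq_eq field_simps)
  finally have le: "(inverse (sqrt (q t)) / 2) * qd \<le> g t" using gS by linarith
  have "((\<lambda>t. I_fun t - ell t) has_real_derivative g t - (inverse (sqrt (q t)) / 2) * qd) (at t)"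
    by (rule DERIV_diff[OF I_deriv dell])
  then show ?thesis by (rule ex_ge) (use le in linarith)
qed

lemma main_pos:
  assumes x: "0 < x" shows "ell x \<le> I_fun x"
proof -
  let ?D = "\<lambda>t. I_fun t - ell t"
  have cI: "isCont I_fun t" for t using I_deriv DERIV_isCont by blast
  have cell: "isCont ell t" if "0 \<le> t" for t
  proof (cases "t = 0")
    case True
    have "isCont (\<lambda>t. sqrt (q t)) 0" by (intro isCont_o2[OF q_cont0] isCont_real_sqrt)
    then show ?thesis unfolding ell_q[abs_def] True .
  next
    case False
    then have "0 < t" using that by simp
    then obtain d where "(?D has_real_derivative d) (at t)" using key by blast
    then have "isCont ?D t" using DERIV_isCont by blast
    then have "isCont (\<lambda>s. I_fun s - ?D s) t" by (rule isCont_diff[OF cI])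
    then show ?thesis by simp
  qed
  have "?D 0 \<le> ?D x"
  proof (rule DERIV_nonneg_imp_increasing_open[of 0 x])
    show "continuous_on {0..x} ?D"
      by (intro continuous_at_imp_continuous_on ballI continuous_intros cI cell) auto
  qed (use x key in auto)
  moreover have "?D 0 = 0" by (simp add: I0 ell_def)
  ultimately show ?thesis by simp
qed

theorem lemma8:
  fixes x :: real
  assumes "x \<noteq> 0"
  shows "I_fun x \<ge> ell x"
proof (cases "x > 0")
  case True then show ?thesis by (rule main_pos)
next
  case False
  then have "0 < - x" using assms by simp
  then have "ell (- x) \<le> I_fun (- x)" by (rule main_pos)
  then show ?thesis by (simp add: I_even ell_even)
qed

end
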